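(* Let $h(z)=\frac{1}{2\pi}\big(1+\mathrm{erf}(\sqrt2\,z)\big)$ for $z\in\mathbb C$, where $\mathrm{erf}$ is the (entire) error function, and for $(x_1,y_1),(x_2,y_2)\in\mathbb R^2$ define $$\rho^{T}\big((x_1,y_1),(x_2,y_2)\big)=-e^{-(x_1-x_2)^2-(y_1-y_2)^2}\,\Big|h\Big(\tfrac12\big(y_1+y_2-i(x_1-x_2)\big)\Big)\Big|^2$$ (the truncated two-point correlation of the edge scaled complex Ginibre ensemble). Then, with $\beta=2$, the edge dipole moment sum rule holds: $$-2\pi\beta\int_{-\infty}^{\infty}dy\,\bigg(\int_{-\infty}^{\infty}dy'\,(y'-y)\int_{-\infty}^{\infty}dx'\,\rho^{T}\big((0,y),(x',y')\big)\bigg)=1,$$ where the integrations are performed in the order: first over $x'$, then over $y'$, then over $y$.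
   Context: The order of the $y$ and $y'$ integrations cannot be interchanged. *)

theory Defs
  imports "HOL-Analysis.Analysis"
begin

definition cerf :: "complex \<Rightarrow> complex" where
  "cerf z = (2 / complex_of_real (sqrt pi)) *
     (\<Sum>n. (-1) ^ n * z ^ (2 * n + 1) / (fact n * of_nat (2 * n + 1)))"

definition ginibre_h :: "complex \<Rightarrow> complex" where
  "ginibre_h z = (1 + cerf (complex_of_real (sqrt 2) * z)) / complex_of_real (2 * pi)"

definition rhoT :: "real \<times> real \<Rightarrow> real \<times> real \<Rightarrow> real" where
  "rhoT p q = (case p of (x1, y1) \<Rightarrow> case q of (x2, y2) \<Rightarrow>
     - exp (- (x1 - x2)\<^sup>2 - (y1 - y2)\<^sup>2) *
       (cmod (ginibre_h ((complex_of_real (y1 + y2) - \<i> * complex_of_real (x1 - x2)) / 2)))\<^sup>2)"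

end

theory Submission
  imports Defs "HOL-Probability.Probability" "HOL-Real_Asymp.Real_Asymp"
begin

lemma int_pow01:
  "set_integrable lborel {0..1::real} (\<lambda>l. l ^ (2*i))"
  "(LBINT l:{0..1::real}. l ^ (2*i)) = 1 / (2 * real i + 1)"
proof -
  show "set_integrable lborel {0..1::real} (\<lambda>l. l ^ (2*i))"
    by (intro borel_integrable_atLeastAtMost') (auto intro!: continuous_intros)
  define F where "F l = l^(2*i+1) / (2*i+1)" for l :: real
  have "(LBINT l=ereal 0..ereal 1. l ^ (2*i)) = F 1 - F 0"
  proof (rule interval_integral_FTC_finite)
    show "continuous_on {min 0 1..max 0 1} (\<lambda>l::real. l ^ (2 * i))" by (intro continuous_intros)
    fix l :: real
    have "((\<lambda>l. l^(2*i+1) / (2*i+1)) has_real_derivative (real (2*i+1) * l ^ (2*i+1 - Suc 0)) / (2*i+1)) (at l)"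
      by (intro DERIV_cdivide DERIV_pow)
    then have "(F has_real_derivative l ^ (2*i)) (at l)"
      unfolding F_def by simp
    then show "(F has_vector_derivative l ^ (2 * i)) (at l within {min 0 1..max 0 1})"
      by (simp add: has_real_derivative_iff_has_vector_derivative[symmetric] has_field_derivative_at_within)
  qed
  then show "(LBINT l:{0..1::real}. l ^ (2*i)) = 1 / (2 * real i + 1)"
    by (subst (asm) interval_integral_Icc) (simp_all add: F_def)
qed

lemma cerf_sum_integral:
  fixes z :: complex
  shows "(\<Sum>n. (-1) ^ n * z ^ (2 * n + 1) / (fact n * of_nat (2 * n + 1))) =
         (LINT l|lborel. indicator {0..1} l *\<^sub>R (z * exp (- (complex_of_real l * z)\<^sup>2)))"
proof -
  define f where "f i l = complex_of_real (indicator {0..1} l * l^(2*i)) * (z * (- (z^2))^i / fact i)" for i and l :: real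
  have hii: "integrable lborel (\<lambda>l::real. indicator {0..1} l * l^(2*i))" for i
    using int_pow01(1)[of i] by (simp add: set_integrable_def mult.commute)
  have hvi: "(\<integral>l. indicator {0..1} (l::real) * l^(2*i) \<partial>lborel) = 1 / (2 * real i + 1)" for i
    using int_pow01(2)[of i] by (simp add: set_lebesgue_integral_def)
  have fint: "integrable lborel (f i)" for i
    unfolding f_def by (intro integrable_mult_left integrable_of_real hii)
  have fval: "integral\<^sup>L lborel (f i) = (-1) ^ i * z ^ (2 * i + 1) / (fact i * of_nat (2 * i + 1))" for i
  proof -
    have "integral\<^sup>L lborel (f i) = (\<integral>l. complex_of_real (indicator {0..1} l * l^(2*i)) \<partial>lborel) * (z * (- (z^2))^i / fact i)"
      unfolding f_def by (rule integral_mult_left_zero)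
    also have "(\<integral>l. complex_of_real (indicator {0..1} l * l^(2*i)) \<partial>lborel) = complex_of_real (1 / (2 * real i + 1))"
      by (subst integral_of_real) (simp_all add: hvi hii)
    finally have "integral\<^sup>L lborel (f i) = complex_of_real (1 / (2 * real i + 1)) * (z * (- (z^2))^i / fact i)" .
    also have "\<dots> = (-1) ^ i * z ^ (2 * i + 1) / (fact i * of_nat (2 * i + 1))"
    proof -
      have e: "(- (z^2))^i = (-1)^i * z^(2*i)" by (simp add: power_minus[of "z^2"] power_mult)
      show ?thesis by (simp add: e field_simps)
    qed
    finally show ?thesis .
  qed
  have nf: "norm (f i l) = indicator {0..1} l * l^(2*i) * (cmod z * cmod z ^ (2*i) / fact i)" for i l
    unfolding f_def by (simp add: norm_mult norm_divide norm_power abs_mult indicator_def power_abs power_mult)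
  have fsum: "(\<lambda>i. f i l) sums (indicator {0..1} l *\<^sub>R (z * exp (- (complex_of_real l * z)\<^sup>2)))" for l
  proof -
    have "(\<lambda>i. (- (complex_of_real l * z)\<^sup>2) ^ i /\<^sub>R fact i) sums exp (- (complex_of_real l * z)\<^sup>2)"
      by (rule exp_converges)
    then have "(\<lambda>i. complex_of_real (indicator {0..1} l) * z * ((- (complex_of_real l * z)\<^sup>2) ^ i /\<^sub>R fact i)) sums
        (complex_of_real (indicator {0..1} l) * z * exp (- (complex_of_real l * z)\<^sup>2))"
      by (rule sums_mult)
    moreover have "complex_of_real (indicator {0..1} l) * z * ((- (complex_of_real l * z)\<^sup>2) ^ i /\<^sub>R fact i) = f i l" for i
    proof -
      have h: "- (complex_of_real l * z)\<^sup>2 = (complex_of_real l)^2 * (- (z^2))" by (simp add: power_mult_distrib)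
      have e2: "(- (complex_of_real l * z)\<^sup>2) ^ i = complex_of_real l ^ (2*i) * (- (z^2))^i"
        unfolding h by (simp only: power_mult_distrib power_mult)
      show ?thesis unfolding f_def e2 by (simp add: scaleR_conv_of_real field_simps mult_ac)
    qed
    ultimately show ?thesis by (simp add: scaleR_conv_of_real mult_ac)
  qed
  have "(\<integral>l. (\<Sum>i. f i l) \<partial>lborel) = (\<Sum>i. integral\<^sup>L lborel (f i))"
  proof (rule integral_suminf)
    show "integrable lborel (f i)" for i by (rule fint)
    show "AE x in lborel. summable (\<lambda>i. norm (f i x))"
    proof (intro AE_I2)
      fix l :: real
      have "summable (\<lambda>i. indicator {0..1} l * cmod z * (inverse (fact i) * (l^2 * cmod z ^ 2) ^ i))"
        by (intro summable_mult summable_exp)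
      moreover have "indicator {0..1} l * cmod z * (inverse (fact i) * (l^2 * cmod z ^ 2) ^ i) = norm (f i l)" for i
        unfolding nf by (simp add: power_mult_distrib power_mult[symmetric] field_simps mult_ac)
      ultimately show "summable (\<lambda>i. norm (f i l))" by simp
    qed
    show "summable (\<lambda>i. \<integral>x. norm (f i x) \<partial>lborel)"
    proof (rule summable_comparison_test)
      show "summable (\<lambda>i. cmod z * (inverse (fact i) * (cmod z ^ 2) ^ i))"
        by (intro summable_mult summable_exp)
      show "\<exists>N. \<forall>n\<ge>N. norm (\<integral>x. norm (f n x) \<partial>lborel) \<le> cmod z * (inverse (fact n) * (cmod z ^ 2) ^ n)"
      proof (intro exI allI impI)
        fix n :: nat
        have "(\<integral>x. norm (f n x) \<partial>lborel) = (1 / (2 * real n + 1)) * (cmod z * cmod z ^ (2*n) / fact n)"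
          unfolding nf by (simp add: hvi)
        also have "\<dots> \<le> 1 * (cmod z * cmod z ^ (2*n) / fact n)"
          by (rule mult_right_mono) auto
        also have "\<dots> = cmod z * (inverse (fact n) * (cmod z ^ 2) ^ n)"
          by (simp add: field_simps power_mult mult.commute[of 2 n] flip: power_mult)
        finally show "norm (\<integral>x. norm (f n x) \<partial>lborel) \<le> cmod z * (inverse (fact n) * (cmod z ^ 2) ^ n)"
          by simp
      qed
    qed
  qed
  then show ?thesis
    using fsum by (simp add: sums_iff fval)
qed

lemma gauss_bound:
  fixes c :: complex and t l :: real
  assumes "0 \<le> l" "l \<le> 1"
  shows "norm (exp (- (complex_of_real t - complex_of_real l * c)\<^sup>2)) \<le> exp (cmod c ^ 2) * exp (- t\<^sup>2/2)"
proof -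
  have re: "Re (- (complex_of_real t - complex_of_real l * c)\<^sup>2) = - ((t - l * Re c)\<^sup>2 - (l * Im c)\<^sup>2)"
    by (simp add: power2_eq_square algebra_simps)
  have l2: "l\<^sup>2 \<le> 1" using assms by (simp add: power_le_one)
  have c2: "cmod c ^ 2 = (Re c)\<^sup>2 + (Im c)\<^sup>2" by (simp add: cmod_power2)
  have a: "(t - l * Re c)\<^sup>2 \<ge> t\<^sup>2/2 - (l * Re c)\<^sup>2"
  proof -
    have "0 \<le> (t - 2 * (l * Re c))\<^sup>2 / 2" by simp
    then show ?thesis by (simp add: power2_eq_square algebra_simps)
  qed
  have b: "(l * Re c)\<^sup>2 \<le> (Re c)\<^sup>2" "(l * Im c)\<^sup>2 \<le> (Im c)\<^sup>2"
    using l2 by (auto simp: power_mult_distrib intro!: mult_left_le_one_le)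
  have "Re (- (complex_of_real t - complex_of_real l * c)\<^sup>2) \<le> cmod c ^ 2 + - t\<^sup>2/2"
    unfolding re c2 using a b by linarith
  then show ?thesis
    by (simp add: norm_exp_eq_Re exp_add[symmetric])
qed

lemma pf_lborel: "pair_sigma_finite lborel lborel"
  by (simp add: pair_sigma_finite_def lborel.sigma_finite_measure_axioms)

lemma deriv_gl:
  fixes c :: complex and t l :: real
  shows "((\<lambda>l. exp (- (complex_of_real t - complex_of_real l * c)\<^sup>2)) has_vector_derivative
          (2 * c * (complex_of_real t - complex_of_real l * c) * exp (- (complex_of_real t - complex_of_real l * c)\<^sup>2))) (at l within S)"
proof -
  have "((\<lambda>w. exp (- (complex_of_real t - w * c)\<^sup>2)) has_field_derivative
          (2 * c * (complex_of_real t - complex_of_real l * c) * exp (- (complex_of_real t - complex_of_real l * c)\<^sup>2))) (at (complex_of_real l))"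
    by (auto intro!: derivative_eq_intros simp: power2_eq_square algebra_simps)
  from has_vector_derivative_real_field[OF this] show ?thesis by simp
qed

lemma deriv_gt:
  fixes c :: complex and t l :: real
  shows "((\<lambda>t. - c * exp (- (complex_of_real t - complex_of_real l * c)\<^sup>2)) has_vector_derivative
          (2 * c * (complex_of_real t - complex_of_real l * c) * exp (- (complex_of_real t - complex_of_real l * c)\<^sup>2))) (at t within S)"
proof -
  have "((\<lambda>w. - c * exp (- (w - complex_of_real l * c)\<^sup>2)) has_field_derivative
          (2 * c * (complex_of_real t - complex_of_real l * c) * exp (- (complex_of_real t - complex_of_real l * c)\<^sup>2))) (at (complex_of_real t))"
    by (auto intro!: derivative_eq_intros simp: power2_eq_square algebra_simps)
  from has_vector_derivative_real_field[OF this] show ?thesis by simp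
qed

lemma ftc_l:
  fixes c :: complex and t :: real
  shows "(LINT l|lborel. indicator {0..1} l *\<^sub>R (2 * c * (complex_of_real t - complex_of_real l * c) * exp (- (complex_of_real t - complex_of_real l * c)\<^sup>2)))
     = exp (- (complex_of_real t - c)\<^sup>2) - exp (- (complex_of_real t)\<^sup>2)"
proof -
  have "(LBINT l=ereal 0..ereal 1. (2 * c * (complex_of_real t - complex_of_real l * c) * exp (- (complex_of_real t - complex_of_real l * c)\<^sup>2)))
     = (\<lambda>l. exp (- (complex_of_real t - complex_of_real l * c)\<^sup>2)) 1 - (\<lambda>l. exp (- (complex_of_real t - complex_of_real l * c)\<^sup>2)) 0"
    by (rule interval_integral_FTC_finite) (auto intro!: continuous_intros deriv_gl)
  then show ?thesis
    by (subst (asm) interval_integral_Icc) (simp_all add: set_lebesgue_integral_def)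
qed



lemma lim_gauss: "((\<lambda>t::real. exp (- t\<^sup>2/2)) \<longlongrightarrow> 0) at_top"
  by real_asymp

lemma integrable_gauss_lin:
  "integrable lborel (\<lambda>t::real. (A + B * \<bar>t\<bar>) * exp (- t\<^sup>2/2))"
proof -
  have i0: "integrable lborel (\<lambda>t::real. std_normal_density t * \<bar>t\<bar> ^ 0)"
    by (rule integrable_std_normal_moment_abs)
  have i1: "integrable lborel (\<lambda>t::real. std_normal_density t * \<bar>t\<bar> ^ 1)"
    by (rule integrable_std_normal_moment_abs)
  have "integrable lborel (\<lambda>t::real. (sqrt (2*pi) * A) * (std_normal_density t * \<bar>t\<bar> ^ 0) + (sqrt (2*pi) * B) * (std_normal_density t * \<bar>t\<bar> ^ 1))"
    by (rule Bochner_Integration.integrable_add[OF Bochner_Integration.integrable_mult_right[OF i0] Bochner_Integration.integrable_mult_right[OF i1]])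
  then show ?thesis
    by (simp add: std_normal_density_def field_simps)
qed


lemma integrand_bound:
  fixes c :: complex and t l :: real
  assumes "0 \<le> l" "l \<le> 1"
  shows "norm (2 * c * (complex_of_real t - complex_of_real l * c) * exp (- (complex_of_real t - complex_of_real l * c)\<^sup>2))
     \<le> (2 * cmod c * cmod c * exp (cmod c ^ 2) + 2 * cmod c * exp (cmod c ^ 2) * \<bar>t\<bar>) * exp (- t\<^sup>2/2)"
proof -
  have n1: "norm (complex_of_real t - complex_of_real l * c) \<le> \<bar>t\<bar> + cmod c"
  proof -
    have "norm (complex_of_real t - complex_of_real l * c) \<le> norm (complex_of_real t) + norm (complex_of_real l * c)"
      by (rule norm_triangle_ineq4)
    also have "norm (complex_of_real l * c) \<le> cmod c"
      using assms by (simp add: norm_mult mult_left_le_one_le)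
    finally show ?thesis by simp
  qed
  have "norm (2 * c * (complex_of_real t - complex_of_real l * c) * exp (- (complex_of_real t - complex_of_real l * c)\<^sup>2))
      = 2 * cmod c * norm (complex_of_real t - complex_of_real l * c) * norm (exp (- (complex_of_real t - complex_of_real l * c)\<^sup>2))"
    by (simp add: norm_mult)
  also have "\<dots> \<le> 2 * cmod c * (\<bar>t\<bar> + cmod c) * (exp (cmod c ^ 2) * exp (- t\<^sup>2/2))"
    by (intro mult_mono mult_left_mono n1 gauss_bound assms) auto
  also have "\<dots> = (2 * cmod c * cmod c * exp (cmod c ^ 2) + 2 * cmod c * exp (cmod c ^ 2) * \<bar>t\<bar>) * exp (- t\<^sup>2/2)"
    by (simp add: algebra_simps)
  finally show ?thesis .
qed

lemma ftc_t:
  fixes c :: complex and l :: real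
  assumes "0 \<le> l" "l \<le> 1"
  shows "set_integrable lborel {0<..} (\<lambda>t. 2 * c * (complex_of_real t - complex_of_real l * c) * exp (- (complex_of_real t - complex_of_real l * c)\<^sup>2))"
    and "(LINT t|lborel. indicator {0<..} t *\<^sub>R (2 * c * (complex_of_real t - complex_of_real l * c) * exp (- (complex_of_real t - complex_of_real l * c)\<^sup>2)))
     = c * exp (- (complex_of_real l * c)\<^sup>2)"
proof -
  define f where "f t = 2 * c * (complex_of_real t - complex_of_real l * c) * exp (- (complex_of_real t - complex_of_real l * c)\<^sup>2)" for t :: real
  define F where "F t = - c * exp (- (complex_of_real t - complex_of_real l * c)\<^sup>2)" for t :: real
  have fint: "integrable lborel f"
  proof (rule Bochner_Integration.integrable_bound)
    show "integrable lborel (\<lambda>t::real. (2 * cmod c * cmod c * exp (cmod c ^ 2) + 2 * cmod c * exp (cmod c ^ 2) * \<bar>t\<bar>) * exp (- t\<^sup>2/2))"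
      by (rule integrable_gauss_lin)
    show "f \<in> borel_measurable lborel" unfolding f_def by measurable
    show "AE x in lborel. norm (f x) \<le> norm ((2 * cmod c * cmod c * exp (cmod c ^ 2) + 2 * cmod c * exp (cmod c ^ 2) * \<bar>x\<bar>) * exp (- x\<^sup>2/2))"
      using integrand_bound[OF assms, of c] by (intro AE_I2) (simp add: f_def)
  qed
  then show si: "set_integrable lborel {0<..} f"
    unfolding set_integrable_def by (intro integrable_mult_indicator) auto
  have "(LBINT t=0..\<infinity>. f t) = 0 - F 0"
  proof (rule interval_integral_FTC_integrable)
    show "(0::ereal) < \<infinity>" by simp
    show "(F has_vector_derivative f x) (at x)" for x
      unfolding F_def f_def by (rule deriv_gt)
    show "isCont f x" for x unfolding f_def by (intro continuous_intros)
    have "einterval 0 \<infinity> = {0::real<..}" by (auto simp: einterval_def zero_ereal_def)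
    then show "set_integrable lborel (einterval 0 \<infinity>) f" using si by simp
    show "((F \<circ> real_of_ereal) \<longlongrightarrow> F 0) (at_right 0)"
      unfolding zero_ereal_def ereal_tendsto_simps F_def by (intro tendsto_eq_intros) auto
    show "((F \<circ> real_of_ereal) \<longlongrightarrow> 0) (at_left \<infinity>)"
      unfolding ereal_tendsto_simps
    proof (rule Lim_null_comparison)
      show "\<forall>\<^sub>F t in at_top. norm (F t) \<le> cmod c * exp (cmod c ^ 2) * exp (- t\<^sup>2/2)"
      proof (intro always_eventually allI)
        fix t :: real
        have "norm (F t) = cmod c * norm (exp (- (complex_of_real t - complex_of_real l * c)\<^sup>2))"
          by (simp add: F_def norm_mult del: norm_exp_eq_Re)
        also have "\<dots> \<le> cmod c * (exp (cmod c ^ 2) * exp (- t\<^sup>2/2))"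
          by (rule mult_left_mono[OF gauss_bound[OF assms]]) simp
        finally show "norm (F t) \<le> cmod c * exp (cmod c ^ 2) * exp (- t\<^sup>2/2)" by (simp add: mult.assoc)
      qed
      show "((\<lambda>t. cmod c * exp (cmod c ^ 2) * exp (- t\<^sup>2/2)) \<longlongrightarrow> 0) at_top"
        using tendsto_mult_left[OF lim_gauss, of "cmod c * exp (cmod c ^ 2)"] by simp
    qed
  qed
  then show "(LINT t|lborel. indicator {0<..} t *\<^sub>R f t) = c * exp (- (complex_of_real l * c)\<^sup>2)"
    by (simp add: interval_lebesgue_integral_0_infty set_lebesgue_integral_def F_def)
qed

lemma integrable_gauss_shift:
  fixes c :: complex
  shows "integrable lborel (\<lambda>t. indicator {0<..} t *\<^sub>R exp (- (complex_of_real t - c)\<^sup>2))"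
proof (rule Bochner_Integration.integrable_bound)
  show "integrable lborel (\<lambda>t::real. (exp (cmod c ^ 2) + 0 * \<bar>t\<bar>) * exp (- t\<^sup>2/2))"
    by (rule integrable_gauss_lin)
  show "(\<lambda>t. indicator {0<..} t *\<^sub>R exp (- (complex_of_real t - c)\<^sup>2)) \<in> borel_measurable lborel" by measurable
  show "AE x in lborel. norm (indicator {0<..} x *\<^sub>R exp (- (complex_of_real x - c)\<^sup>2)) \<le> norm ((exp (cmod c ^ 2) + 0 * \<bar>x\<bar>) * exp (- x\<^sup>2/2))"
  proof (intro AE_I2)
    fix x :: real
    have "norm (exp (- (complex_of_real x - complex_of_real 1 * c)\<^sup>2)) \<le> exp (cmod c ^ 2) * exp (- x\<^sup>2/2)"
      by (rule gauss_bound) auto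
    then show "norm (indicator {0<..} x *\<^sub>R exp (- (complex_of_real x - c)\<^sup>2)) \<le> norm ((exp (cmod c ^ 2) + 0 * \<bar>x\<bar>) * exp (- x\<^sup>2/2))"
      by (auto simp: indicator_def simp del: norm_exp_eq_Re)
  qed
qed

lemma rep_diff:
  fixes c :: complex
  shows "(LINT t|lborel. indicator {0<..} t *\<^sub>R exp (- (complex_of_real t - c)\<^sup>2)) - (LINT t|lborel. indicator {0<..} t *\<^sub>R exp (- (complex_of_real t)\<^sup>2))
       = (LINT l|lborel. indicator {0..1} l *\<^sub>R (c * exp (- (complex_of_real l * c)\<^sup>2)))"
proof -
  define f where "f t l = 2 * c * (complex_of_real t - complex_of_real l * c) * exp (- (complex_of_real t - complex_of_real l * c)\<^sup>2)" for t l :: real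
  define k where "k t l = indicator {0<..} t *\<^sub>R (indicator {0..1} l *\<^sub>R f t l)" for t l :: real
  define B where "B t = (2 * cmod c * cmod c * exp (cmod c ^ 2) + 2 * cmod c * exp (cmod c ^ 2) * \<bar>t\<bar>) * exp (- t\<^sup>2/2)" for t :: real
  have Bint: "integrable lborel B" unfolding B_def by (rule integrable_gauss_lin)
  have Bnn: "0 \<le> B t" for t unfolding B_def by (intro mult_nonneg_nonneg add_nonneg_nonneg) auto
  have kb: "norm (k t l) \<le> indicator {0..1} l * B t" for t l
  proof (cases "l \<in> {0..1}")
    case True
    then have fb: "norm (f t l) \<le> B t" using integrand_bound[of l c t] by (simp add: f_def B_def)
    have "norm (k t l) = indicator {0<..} t * norm (f t l)" using True by (simp add: k_def)
    also have "\<dots> \<le> norm (f t l)" by (simp add: indicator_def)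
    finally show ?thesis using True fb by simp
  next
    case False
    then show ?thesis by (simp add: k_def)
  qed
  have kmeas[measurable]: "(\<lambda>(t, l). k t l) \<in> borel_measurable (lborel \<Otimes>\<^sub>M lborel)"
    unfolding k_def f_def by measurable
  have ind01: "integrable lborel (\<lambda>l::real. indicator {0..1} l * b)" for b :: real
    using borel_integrable_atLeastAtMost'[of 0 1 "\<lambda>_. b"] by (simp add: set_integrable_def mult.commute)
  have int01: "(\<integral>l. indicator {0..1} (l::real) * b \<partial>lborel) = b" for b :: real
    by simp
  have kint_l: "integrable lborel (\<lambda>l. k t l)" for t
  proof (rule Bochner_Integration.integrable_bound)
    show "integrable lborel (\<lambda>l::real. indicator {0..1} l * B t)" by (rule ind01)
    show "(\<lambda>l. k t l) \<in> borel_measurable lborel" unfolding k_def f_def by measurable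
    show "AE l in lborel. norm (k t l) \<le> norm (indicator {0..1} l * B t)"
      using kb by (intro AE_I2) (rule order_trans[OF kb], simp)
  qed
  have kprod: "integrable (lborel \<Otimes>\<^sub>M lborel) (\<lambda>(t, l). k t l)"
  proof (rule pair_sigma_finite.Fubini_integrable[OF pf_lborel])
    show "(\<lambda>(t, l). k t l) \<in> borel_measurable (lborel \<Otimes>\<^sub>M lborel)" by (rule kmeas)
    show "AE t in lborel. integrable lborel (\<lambda>l. case (t, l) of (t, l) \<Rightarrow> k t l)"
      using kint_l by simp
    show "integrable lborel (\<lambda>t. \<integral>l. norm (case (t, l) of (t, l) \<Rightarrow> k t l) \<partial>lborel)"
    proof (rule Bochner_Integration.integrable_bound[OF Bint])
      show "(\<lambda>t. \<integral>l. norm (case (t, l) of (t, l) \<Rightarrow> k t l) \<partial>lborel) \<in> borel_measurable lborel"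
        by measurable
      show "AE t in lborel. norm (\<integral>l. norm (case (t, l) of (t, l) \<Rightarrow> k t l) \<partial>lborel) \<le> norm (B t)"
      proof (intro AE_I2)
        fix t :: real
        have "(\<integral>l. norm (k t l) \<partial>lborel) \<le> (\<integral>l. indicator {0..1} (l::real) * B t \<partial>lborel)"
          using kint_l[of t] ind01[of "B t"] kb[of t] by (intro Bochner_Integration.integral_mono integrable_norm) auto
        also have "\<dots> = B t" by (rule int01)
        finally have "(\<integral>l. norm (k t l) \<partial>lborel) \<le> B t" .
        moreover have "0 \<le> (\<integral>l. norm (k t l) \<partial>lborel)" by simp
        ultimately show "norm (\<integral>l. norm (case (t, l) of (t, l) \<Rightarrow> k t l) \<partial>lborel) \<le> norm (B t)"
          by simp
      qed
    qed
  qed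
  have fub: "(\<integral>l. (\<integral>t. k t l \<partial>lborel) \<partial>lborel) = (\<integral>t. (\<integral>l. k t l \<partial>lborel) \<partial>lborel)"
    by (rule pair_sigma_finite.Fubini_integral[OF pf_lborel kprod])
  have inner_l: "(\<integral>l. k t l \<partial>lborel) = indicator {0<..} t *\<^sub>R exp (- (complex_of_real t - c)\<^sup>2) - indicator {0<..} t *\<^sub>R exp (- (complex_of_real t)\<^sup>2)" for t
  proof -
    have "(\<integral>l. k t l \<partial>lborel) = indicator {0<..} t *\<^sub>R (\<integral>l. indicator {0..1} l *\<^sub>R f t l \<partial>lborel)"
      unfolding k_def by (rule integral_scaleR_right)
    also have "\<dots> = indicator {0<..} t *\<^sub>R (exp (- (complex_of_real t - c)\<^sup>2) - exp (- (complex_of_real t)\<^sup>2))"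
      unfolding f_def by (subst ftc_l) simp
    finally show ?thesis by (simp add: scaleR_diff_right)
  qed
  have inner_t: "(\<integral>t. k t l \<partial>lborel) = indicator {0..1} l *\<^sub>R (c * exp (- (complex_of_real l * c)\<^sup>2))" for l
  proof -
    have "(\<integral>t. k t l \<partial>lborel) = (\<integral>t. indicator {0..1} l *\<^sub>R (indicator {0<..} t *\<^sub>R f t l) \<partial>lborel)"
      unfolding k_def by (simp add: mult.commute)
    also have "\<dots> = indicator {0..1} l *\<^sub>R (\<integral>t. indicator {0<..} t *\<^sub>R f t l \<partial>lborel)"
      by (rule integral_scaleR_right)
    also have "\<dots> = indicator {0..1} l *\<^sub>R (c * exp (- (complex_of_real l * c)\<^sup>2))"
    proof (cases "l \<in> {0..1}")
      case True
      then show ?thesis unfolding f_def by (subst ftc_t(2)) auto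
    next
      case False
      then show ?thesis by simp
    qed
    finally show ?thesis .
  qed
  have "(LINT l|lborel. indicator {0..1} l *\<^sub>R (c * exp (- (complex_of_real l * c)\<^sup>2)))
      = (\<integral>t. indicator {0<..} t *\<^sub>R exp (- (complex_of_real t - c)\<^sup>2) - indicator {0<..} t *\<^sub>R exp (- (complex_of_real t)\<^sup>2) \<partial>lborel)"
    using fub by (simp add: inner_l inner_t)
  also have "\<dots> = (LINT t|lborel. indicator {0<..} t *\<^sub>R exp (- (complex_of_real t - c)\<^sup>2)) - (LINT t|lborel. indicator {0<..} t *\<^sub>R exp (- (complex_of_real t)\<^sup>2))"
    using integrable_gauss_shift[of c] integrable_gauss_shift[of 0] by (intro Bochner_Integration.integral_diff) auto
  finally show ?thesis by simp
qed

lemma A0_val: "(LINT t|lborel. indicator {0<..} t *\<^sub>R exp (- (complex_of_real t)\<^sup>2)) = complex_of_real (sqrt pi / 2)"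
proof -
  have "(LINT t|lborel. indicator {0<..} t *\<^sub>R exp (- (complex_of_real t)\<^sup>2)) = (LINT t|lborel. complex_of_real (indicator {0..} t *\<^sub>R exp (- t\<^sup>2)))"
  proof (rule integral_cong_AE)
    show "AE t in lborel. indicator {0<..} t *\<^sub>R exp (- (complex_of_real t)\<^sup>2) = complex_of_real (indicator {0..} t *\<^sub>R exp (- t\<^sup>2))"
      using AE_lborel_singleton[of 0]
    proof eventually_elim
      fix t :: real assume "t \<noteq> 0"
      have e: "complex_of_real (exp (- t\<^sup>2)) = exp (- (complex_of_real t)\<^sup>2)" by (simp only: of_real_exp of_real_minus of_real_power)
      show "indicator {0<..} t *\<^sub>R exp (- (complex_of_real t)\<^sup>2) = complex_of_real (indicator {0..} t *\<^sub>R exp (- t\<^sup>2))"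
        using \<open>t \<noteq> 0\<close> by (cases "t > 0") (simp_all add: indicator_def e[symmetric])
    qed
  next
    show "(\<lambda>t. indicator {0<..} t *\<^sub>R exp (- (complex_of_real t)\<^sup>2)) \<in> borel_measurable lborel" by measurable
    show "(\<lambda>t. complex_of_real (indicator {0..} t *\<^sub>R exp (- t\<^sup>2))) \<in> borel_measurable lborel" by measurable
  qed
  also have "\<dots> = complex_of_real (LINT t|lborel. indicator {0..} t *\<^sub>R exp (- t\<^sup>2))"
    by (rule integral_of_real) (use gaussian_moment_0 in \<open>simp add: has_bochner_integral_iff\<close>)
  also have "(LINT t|lborel. indicator {0..} t *\<^sub>R exp (- t\<^sup>2)) = sqrt pi / 2"
    using gaussian_moment_0 by (rule has_bochner_integral_integral_eq)
  finally show ?thesis .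
qed

lemma cerf_rep:
  fixes c :: complex
  shows "1 + cerf c = (2 / complex_of_real (sqrt pi)) * (LINT t|lborel. indicator {0<..} t *\<^sub>R exp (- (complex_of_real t - c)\<^sup>2))"
proof -
  have "cerf c = (2 / complex_of_real (sqrt pi)) * ((LINT t|lborel. indicator {0<..} t *\<^sub>R exp (- (complex_of_real t - c)\<^sup>2)) - complex_of_real (sqrt pi / 2))"
    unfolding cerf_def cerf_sum_integral rep_diff[symmetric] A0_val ..
  moreover have "(2 / complex_of_real (sqrt pi)) * complex_of_real (sqrt pi / 2) = 1"
    by (simp add: field_simps)
  ultimately show ?thesis by (simp add: right_diff_distrib)
qed

lemma gauss_int:
  fixes e m :: real
  assumes "0 < e"
  shows "integrable lborel (\<lambda>x. exp (- e * (x - m)\<^sup>2))"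
    and "(LBINT x. exp (- e * (x - m)\<^sup>2)) = sqrt (pi / e)"
proof -
  define s where "s = 1 / sqrt (2 * e)"
  have s_pos: "0 < s" using assms by (simp add: s_def)
  have s2: "2 * s\<^sup>2 = 1 / e" using assms by (simp add: s_def power_divide)
  have eq: "exp (- e * (x - m)\<^sup>2) = sqrt (pi / e) * normal_density m s x" for x
  proof -
    have "normal_density m s x = 1 / sqrt (pi * (1/e)) * exp (- (x - m)\<^sup>2 / (1/e))"
      unfolding normal_density_def s2[symmetric] by (simp add: mult.assoc)
    also have "\<dots> = sqrt (e / pi) * exp (- e * (x - m)\<^sup>2)"
      using assms by (simp add: real_sqrt_divide field_simps)
    finally show ?thesis
      using assms by (simp add: real_sqrt_divide field_simps)
  qed
  show "integrable lborel (\<lambda>x. exp (- e * (x - m)\<^sup>2))"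
    unfolding eq using s_pos by (intro integrable_mult_right integrable_normal_density) auto
  show "(LBINT x. exp (- e * (x - m)\<^sup>2)) = sqrt (pi / e)"
    unfolding eq integral_mult_right_zero integral_normal_density[OF s_pos] by simp
qed

lemma gauss_ft:
  fixes e d :: real
  assumes "0 < e"
  shows "(CLBINT b. complex_of_real (exp (- e * b\<^sup>2)) * cis (2 * b * d)) = complex_of_real (sqrt (pi / e) * exp (- d\<^sup>2 / e))"
proof -
  define c where "c = sqrt (2 * e)"
  have c: "0 < c" using assms by (simp add: c_def)
  define t where "t = 2 * d / c"
  define J where "J = (CLBINT b. complex_of_real (exp (- e * b\<^sup>2)) * cis (2 * b * d))"
  have "char std_normal_distribution t = complex_of_real (exp (- t\<^sup>2 / 2))"
    by (simp add: char_std_normal_distribution)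
  moreover have "char std_normal_distribution t = (CLBINT x. std_normal_density x *\<^sub>R cis (t * x))"
    unfolding char_def by (subst integral_density) (auto simp: cis_conv_exp)
  moreover have "(CLBINT x. std_normal_density x *\<^sub>R cis (t * x)) = \<bar>c\<bar> *\<^sub>R (CLBINT b. std_normal_density (0 + c * b) *\<^sub>R cis (t * (0 + c * b)))"
    using c by (intro lborel_integral_real_affine) simp
  moreover have "std_normal_density (0 + c * b) *\<^sub>R cis (t * (0 + c * b)) = complex_of_real (1 / sqrt (2 * pi)) * (complex_of_real (exp (- e * b\<^sup>2)) * cis (2 * b * d))" for b
  proof -
    have "(c * b)\<^sup>2 / 2 = e * b\<^sup>2" using assms by (simp add: c_def power_mult_distrib)
    then have h1: "std_normal_density (0 + c * b) = (1 / sqrt (2 * pi)) * exp (- e * b\<^sup>2)"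
      by (simp add: std_normal_density_def)
    have h2: "t * (0 + c * b) = 2 * b * d" using c by (simp add: t_def)
    show ?thesis unfolding h1 h2 by (simp add: scaleR_conv_of_real)
  qed
  ultimately have e1: "complex_of_real (exp (- t\<^sup>2 / 2)) = c *\<^sub>R (complex_of_real (1 / sqrt (2 * pi)) * J)"
    using c unfolding J_def by (simp only: integral_mult_right_zero abs_of_pos)
  have tt: "t\<^sup>2 / 2 = d\<^sup>2 / e" using assms by (simp add: t_def c_def power_divide)
  have e2: "complex_of_real (exp (- d\<^sup>2 / e)) = complex_of_real (c / sqrt (2 * pi)) * J"
    using e1 by (simp add: scaleR_conv_of_real tt)
  have k: "sqrt (pi / e) * (c / sqrt (2 * pi)) = 1"
    using assms by (simp add: c_def real_sqrt_divide real_sqrt_mult field_simps)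
  have "complex_of_real (sqrt (pi / e)) * complex_of_real (exp (- d\<^sup>2 / e)) = complex_of_real (sqrt (pi / e) * (c / sqrt (2 * pi))) * J"
    unfolding e2 of_real_mult by (simp only: mult.assoc)
  then show ?thesis unfolding k J_def by simp
qed

lemma fubini_bound:
  fixes f :: "real \<Rightarrow> real \<Rightarrow> 'a::{banach, second_countable_topology}" and g h :: "real \<Rightarrow> real"
  assumes fm[measurable]: "(\<lambda>(x, y). f x y) \<in> borel_measurable (lborel \<Otimes>\<^sub>M lborel)"
    and gi: "integrable lborel g" and hi: "integrable lborel h"
    and gn: "\<And>x. 0 \<le> g x" and hn: "\<And>y. 0 \<le> h y"
    and b: "\<And>x y. norm (f x y) \<le> g x * h y"
  shows "(\<integral>x. (\<integral>y. f x y \<partial>lborel) \<partial>lborel) = (\<integral>y. (\<integral>x. f x y \<partial>lborel) \<partial>lborel)"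
    and "integrable lborel (f x)"
    and "integrable lborel (\<lambda>x. \<integral>y. f x y \<partial>lborel)"
proof -
  have fxm: "f x \<in> borel_measurable lborel" for x
    using measurable_Pair2[OF fm, of x] by simp
  have fym: "(\<lambda>x. f x y) \<in> borel_measurable lborel" for y
    using measurable_Pair1[OF fm, of y] by simp
  have iy: "integrable lborel (f x)" for x
  proof (rule Bochner_Integration.integrable_bound)
    show "integrable lborel (\<lambda>y. g x * h y)" by (intro integrable_mult_right hi)
    show "f x \<in> borel_measurable lborel" by (rule fxm)
    show "AE y in lborel. norm (f x y) \<le> norm (g x * h y)"
      using b gn hn by (intro AE_I2) (rule order_trans[OF b], simp)
  qed
  then show "integrable lborel (f x)" .
  have bnd: "(\<integral>y. norm (f x y) \<partial>lborel) \<le> g x * (\<integral>y. h y \<partial>lborel)" for x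
  proof -
    have "(\<integral>y. norm (f x y) \<partial>lborel) \<le> (\<integral>y. g x * h y \<partial>lborel)"
      by (rule Bochner_Integration.integral_mono[OF integrable_norm[OF iy] integrable_mult_right[OF hi] b])
    then show ?thesis by simp
  qed
  have i1: "integrable lborel (\<lambda>x. \<integral>y. norm (f x y) \<partial>lborel)"
  proof (rule Bochner_Integration.integrable_bound)
    show "integrable lborel (\<lambda>x. g x * (\<integral>y. h y \<partial>lborel))" by (intro integrable_mult_left gi)
    show "(\<lambda>x. \<integral>y. norm (f x y) \<partial>lborel) \<in> borel_measurable lborel" by measurable
    show "AE x in lborel. norm (\<integral>y. norm (f x y) \<partial>lborel) \<le> norm (g x * (\<integral>y. h y \<partial>lborel))"
    proof (intro AE_I2)
      fix x
      have "0 \<le> (\<integral>y. norm (f x y) \<partial>lborel)" by simp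
      then show "norm (\<integral>y. norm (f x y) \<partial>lborel) \<le> norm (g x * (\<integral>y. h y \<partial>lborel))"
        using bnd[of x] by simp
    qed
  qed
  have prod: "integrable (lborel \<Otimes>\<^sub>M lborel) (\<lambda>(x, y). f x y)"
    by (rule pair_sigma_finite.Fubini_integrable[OF pf_lborel fm]) (use i1 iy in auto)
  show "(\<integral>x. (\<integral>y. f x y \<partial>lborel) \<partial>lborel) = (\<integral>y. (\<integral>x. f x y \<partial>lborel) \<partial>lborel)"
    using pair_sigma_finite.Fubini_integral[OF pf_lborel prod] by simp
  show "integrable lborel (\<lambda>x. \<integral>y. f x y \<partial>lborel)"
  proof (rule Bochner_Integration.integrable_bound[OF i1])
    show "(\<lambda>x. \<integral>y. f x y \<partial>lborel) \<in> borel_measurable lborel" by measurable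
    show "AE x in lborel. norm (\<integral>y. f x y \<partial>lborel) \<le> norm (\<integral>y. norm (f x y) \<partial>lborel)"
      by (intro AE_I2) (simp add: integral_norm_bound)
  qed
qed

definition psi :: "real \<Rightarrow> real \<Rightarrow> real" where
  "psi a t = indicator {0<..} t * exp (- (t - a)\<^sup>2)"

definition Gf :: "real \<Rightarrow> real \<Rightarrow> complex" where
  "Gf a b = (CLBINT t. complex_of_real (psi a t) * cis (2 * b * t))"

lemma cis_meas[measurable]: "cis \<in> borel_measurable borel"
  by (intro borel_measurable_continuous_onI continuous_intros)

lemma cnj_meas[measurable]: "cnj \<in> borel_measurable borel"
  by (intro borel_measurable_continuous_onI continuous_intros)

lemma psi_meas[measurable]: "(\<lambda>(a, t). psi a t) \<in> borel_measurable (lborel \<Otimes>\<^sub>M lborel)"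
  unfolding psi_def by measurable

lemma psi_meas1[measurable]: "psi a \<in> borel_measurable lborel"
  unfolding psi_def by measurable

lemma psi_nn: "0 \<le> psi a t" and psi_le1: "psi a t \<le> 1" and psi_le: "psi a t \<le> exp (- (t - a)\<^sup>2)"
  by (auto simp: psi_def indicator_def)

lemma psi_int: "integrable lborel (psi a)"
proof (rule Bochner_Integration.integrable_bound)
  show "integrable lborel (\<lambda>t. exp (- 1 * (t - a)\<^sup>2))" by (rule gauss_int) simp
  show "psi a \<in> borel_measurable lborel" by measurable
  show "AE t in lborel. norm (psi a t) \<le> norm (exp (- 1 * (t - a)\<^sup>2))"
    using psi_nn psi_le by (intro AE_I2) simp
qed

lemma Gf_meas[measurable]: "(\<lambda>b. Gf a b) \<in> borel_measurable lborel"
  unfolding Gf_def by measurable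

lemma Gf_bound: "norm (Gf a b) \<le> (LBINT t. psi a t)"
proof -
  have "norm (Gf a b) \<le> (LBINT t. norm (complex_of_real (psi a t) * cis (2 * b * t)))"
    unfolding Gf_def by (rule integral_norm_bound)
  also have "\<dots> = (LBINT t. psi a t)"
    using psi_nn by (simp add: norm_mult)
  finally show ?thesis .
qed

lemma cnj_Gf: "cnj (Gf a b) = (CLBINT r. complex_of_real (psi a r) * cis (- (2 * b * r)))"
  unfolding Gf_def by (subst Bochner_Integration.integral_cnj[symmetric]) (simp add: cis_cnj)


lemma plancherel_eps:
  fixes a e :: real
  assumes e: "0 < e"
  shows "integrable lborel (\<lambda>b. exp (- e * b\<^sup>2) * (cmod (Gf a b))\<^sup>2)"
    and "(LBINT b. exp (- e * b\<^sup>2) * (cmod (Gf a b))\<^sup>2) =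
         (LBINT t. psi a t * (LBINT r. psi a r * (sqrt (pi / e) * exp (- (t - r)\<^sup>2 / e))))"
proof -
  define C where "C = (LBINT t. psi a t)"
  have C_nn: "0 \<le> C" unfolding C_def using psi_nn by simp
  define E where "E b = exp (- e * b\<^sup>2)" for b :: real
  have Eint: "integrable lborel E"
    using gauss_int(1)[OF e, of 0] by (simp add: E_def[abs_def])
  have E_nn: "0 \<le> E b" for b by (simp add: E_def)
  have Emeas[measurable]: "E \<in> borel_measurable lborel" unfolding E_def by measurable
  define K where "K t r = sqrt (pi / e) * exp (- (t - r)\<^sup>2 / e)" for t r :: real
  define H1 where "H1 b t = complex_of_real (E b) * (complex_of_real (psi a t) * cis (2 * b * t)) * cnj (Gf a b)" for b t :: real
  have stepA: "complex_of_real (E b) * (Gf a b * cnj (Gf a b)) = (CLBINT t. H1 b t)" for b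
  proof -
    have "Gf a b * cnj (Gf a b) = (CLBINT t. complex_of_real (psi a t) * cis (2 * b * t) * cnj (Gf a b))"
      unfolding Gf_def[of a b] by (rule integral_mult_left_zero[symmetric])
    then have "complex_of_real (E b) * (Gf a b * cnj (Gf a b)) = (CLBINT t. complex_of_real (E b) * (complex_of_real (psi a t) * cis (2 * b * t) * cnj (Gf a b)))"
      by (simp add: integral_mult_right_zero)
    then show ?thesis unfolding H1_def by (simp add: mult.assoc)
  qed
  have H1meas[measurable]: "(\<lambda>(b, t). H1 b t) \<in> borel_measurable (lborel \<Otimes>\<^sub>M lborel)"
    unfolding H1_def by measurable
  have H1b: "norm (H1 b t) \<le> (E b * C) * psi a t" for b t
  proof -
    have "norm (H1 b t) = E b * psi a t * norm (Gf a b)"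
      unfolding H1_def using E_nn psi_nn by (simp add: norm_mult)
    also have "\<dots> \<le> E b * psi a t * C"
      unfolding C_def using E_nn psi_nn by (intro mult_left_mono Gf_bound) auto
    finally show ?thesis by (simp add: mult_ac)
  qed
  have fubA: "(CLBINT b. CLBINT t. H1 b t) = (CLBINT t. CLBINT b. H1 b t)"
    by (rule fubini_bound(1)[OF H1meas _ psi_int _ psi_nn H1b])
       (use Eint E_nn C_nn in auto)
  have stepC: "(CLBINT b. H1 b t) = complex_of_real (psi a t * (LBINT r. psi a r * K t r))" for t
  proof -
    define H2 where "H2 b r = complex_of_real (E b) * cis (2 * b * (t - r)) * complex_of_real (psi a t * psi a r)" for b r :: real
    have H1eq: "H1 b t = (CLBINT r. H2 b r)" for b
    proof -
      have "H1 b t = complex_of_real (E b) * (complex_of_real (psi a t) * cis (2 * b * t)) * (CLBINT r. complex_of_real (psi a r) * cis (- (2 * b * r)))"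
        unfolding H1_def cnj_Gf ..
      also have "\<dots> = (CLBINT r. complex_of_real (E b) * (complex_of_real (psi a t) * cis (2 * b * t)) * (complex_of_real (psi a r) * cis (- (2 * b * r))))"
        by (rule integral_mult_right_zero[symmetric])
      also have "\<dots> = (CLBINT r. H2 b r)"
      proof (rule Bochner_Integration.integral_cong[OF refl])
        fix r
        have "cis (2 * b * t) * cis (- (2 * b * r)) = cis (2 * b * (t - r))"
          by (simp add: cis_mult right_diff_distrib)
        then show "complex_of_real (E b) * (complex_of_real (psi a t) * cis (2 * b * t)) * (complex_of_real (psi a r) * cis (- (2 * b * r))) = H2 b r"
          unfolding H2_def by (simp add: mult_ac)
      qed
      finally show ?thesis .
    qed
    have H2meas[measurable]: "(\<lambda>(b, r). H2 b r) \<in> borel_measurable (lborel \<Otimes>\<^sub>M lborel)"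
      unfolding H2_def by measurable
    have H2b: "norm (H2 b r) \<le> E b * (psi a t * psi a r)" for b r
      unfolding H2_def using E_nn psi_nn by (simp add: norm_mult)
    have fubB: "(CLBINT b. CLBINT r. H2 b r) = (CLBINT r. CLBINT b. H2 b r)"
      by (rule fubini_bound(1)[OF H2meas Eint _ E_nn _ H2b])
         (use psi_nn in \<open>auto intro: integrable_mult_right psi_int\<close>)
    have inner: "(CLBINT b. H2 b r) = complex_of_real (psi a t * (psi a r * K t r))" for r
    proof -
      have "(CLBINT b. H2 b r) = (CLBINT b. complex_of_real (exp (- e * b\<^sup>2)) * cis (2 * b * (t - r))) * complex_of_real (psi a t * psi a r)"
        unfolding H2_def E_def by (rule integral_mult_left_zero)
      also have "\<dots> = complex_of_real (sqrt (pi / e) * exp (- (t - r)\<^sup>2 / e)) * complex_of_real (psi a t * psi a r)"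
        by (simp only: gauss_ft[OF e])
      finally show ?thesis unfolding K_def by (simp add: mult_ac)
    qed
    have Kint: "integrable lborel (\<lambda>r. psi a r * K t r)"
    proof (rule Bochner_Integration.integrable_bound)
      show "integrable lborel (\<lambda>r. sqrt (pi / e) * psi a r)" by (intro integrable_mult_right psi_int)
      show "(\<lambda>r. psi a r * K t r) \<in> borel_measurable lborel" unfolding K_def by measurable
      show "AE r in lborel. norm (psi a r * K t r) \<le> norm (sqrt (pi / e) * psi a r)"
      proof (intro AE_I2)
        fix r
        have ex: "exp (- (t - r)\<^sup>2 / e) \<le> 1" using e by simp
        have "psi a r * K t r \<le> psi a r * (sqrt (pi / e) * 1)"
          unfolding K_def using psi_nn ex e by (intro mult_left_mono) auto
        moreover have "0 \<le> psi a r * K t r" unfolding K_def using psi_nn[of a r] e by (intro mult_nonneg_nonneg) auto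
        ultimately show "norm (psi a r * K t r) \<le> norm (sqrt (pi / e) * psi a r)"
          using psi_nn[of a r] by (simp add: mult.commute)
      qed
    qed
    have "(CLBINT b. H1 b t) = (CLBINT b. CLBINT r. H2 b r)" by (simp only: H1eq)
    also have "\<dots> = (CLBINT r. complex_of_real (psi a t * (psi a r * K t r)))" by (simp only: fubB inner)
    also have "\<dots> = complex_of_real (LBINT r. psi a t * (psi a r * K t r))"
      by (rule Bochner_Integration.integral_of_real) (intro integrable_mult_right Kint)
    also have "\<dots> = complex_of_real (psi a t * (LBINT r. psi a r * K t r))"
      by simp
    finally show ?thesis .
  qed
  have realint: "integrable lborel (\<lambda>b. E b * (cmod (Gf a b))\<^sup>2)"
  proof (rule Bochner_Integration.integrable_bound)
    show "integrable lborel (\<lambda>b. C\<^sup>2 * E b)" by (intro integrable_mult_right Eint)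
    show "(\<lambda>b. E b * (cmod (Gf a b))\<^sup>2) \<in> borel_measurable lborel" by measurable
    show "AE b in lborel. norm (E b * (cmod (Gf a b))\<^sup>2) \<le> norm (C\<^sup>2 * E b)"
    proof (intro AE_I2)
      fix b
      have "(cmod (Gf a b))\<^sup>2 \<le> C\<^sup>2"
        unfolding C_def by (intro power_mono Gf_bound) simp
      then show "norm (E b * (cmod (Gf a b))\<^sup>2) \<le> norm (C\<^sup>2 * E b)"
        using E_nn by (simp add: abs_mult mult.commute mult_left_mono)
    qed
  qed
  then show "integrable lborel (\<lambda>b. exp (- e * b\<^sup>2) * (cmod (Gf a b))\<^sup>2)"
    by (simp add: E_def)
  have "complex_of_real (LBINT b. E b * (cmod (Gf a b))\<^sup>2) = (CLBINT b. complex_of_real (E b * (cmod (Gf a b))\<^sup>2))"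
    by (rule Bochner_Integration.integral_of_real[symmetric, OF realint])
  also have "\<dots> = (CLBINT b. complex_of_real (E b) * (Gf a b * cnj (Gf a b)))"
    by (simp only: of_real_mult complex_norm_square)
  also have "\<dots> = (CLBINT b. CLBINT t. H1 b t)" by (simp only: stepA)
  also have "\<dots> = (CLBINT t. complex_of_real (psi a t * (LBINT r. psi a r * K t r)))"
    by (simp only: fubA stepC)
  also have "\<dots> = complex_of_real (LBINT t. psi a t * (LBINT r. psi a r * K t r))"
  proof (rule Bochner_Integration.integral_of_real)
    have "integrable lborel (\<lambda>t. CLBINT b. H1 b t)"
    proof (rule fubini_bound(3)[of "\<lambda>t b. H1 b t" "psi a" "\<lambda>b. E b * C"])
      show "(\<lambda>(t, b). H1 b t) \<in> borel_measurable (lborel \<Otimes>\<^sub>M lborel)" unfolding H1_def by measurable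
      show "norm (H1 b t) \<le> psi a t * (E b * C)" for t b using H1b[of b t] by (simp add: mult.commute)
    qed (use Eint E_nn C_nn psi_int psi_nn in auto)
    then have "integrable lborel (\<lambda>t. Re (CLBINT b. H1 b t))" by (rule integrable_Re)
    then show "integrable lborel (\<lambda>t. psi a t * (LBINT r. psi a r * K t r))"
      by (simp only: stepC Re_complex_of_real)
  qed
  finally show "(LBINT b. exp (- e * b\<^sup>2) * (cmod (Gf a b))\<^sup>2) =
         (LBINT t. psi a t * (LBINT r. psi a r * (sqrt (pi / e) * exp (- (t - r)\<^sup>2 / e))))"
    unfolding E_def K_def by (simp only: of_real_eq_iff)
qed

lemma inner_subst:
  fixes e t :: real
  assumes e: "0 < e"
  shows "(LBINT r. psi a r * (sqrt (pi / e) * exp (- (t - r)\<^sup>2 / e))) = sqrt pi * (LBINT v. psi a (t + sqrt e * v) * exp (- v\<^sup>2))"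
proof -
  have "(LBINT r. psi a r * (sqrt (pi / e) * exp (- (t - r)\<^sup>2 / e))) =
        \<bar>sqrt e\<bar> *\<^sub>R (LBINT v. psi a (t + sqrt e * v) * (sqrt (pi / e) * exp (- (t - (t + sqrt e * v))\<^sup>2 / e)))"
    using e by (intro lborel_integral_real_affine) simp
  also have "\<dots> = sqrt e * (LBINT v. sqrt (pi / e) * (psi a (t + sqrt e * v) * exp (- v\<^sup>2)))"
  proof -
    have "(t - (t + sqrt e * v))\<^sup>2 / e = v\<^sup>2" for v using e by (simp add: power_mult_distrib)
    then show ?thesis using e by (simp add: mult_ac)
  qed
  also have "\<dots> = (sqrt e * sqrt (pi / e)) * (LBINT v. psi a (t + sqrt e * v) * exp (- v\<^sup>2))"
    by simp
  also have "sqrt e * sqrt (pi / e) = sqrt pi"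
    using e by (simp add: real_sqrt_mult[symmetric])
  finally show ?thesis .
qed


lemma psi_meas_borel[measurable]: "psi a \<in> borel_measurable borel"
  unfolding psi_def by measurable

lemma gauss1: "integrable lborel (\<lambda>v::real. exp (- v\<^sup>2))" "(LBINT v. exp (- v\<^sup>2)) = sqrt pi"
proof -
  show "integrable lborel (\<lambda>v::real. exp (- v\<^sup>2))" using gauss_int(1)[of 1 0] by simp
  show "(LBINT v. exp (- v\<^sup>2)) = sqrt pi" using gauss_int(2)[of 1 0] by simp
qed

lemma Iint: "integrable lborel (\<lambda>v. psi a (t + c * v) * exp (- v\<^sup>2))"
proof (rule Bochner_Integration.integrable_bound[OF gauss1(1)])
  show "(\<lambda>v. psi a (t + c * v) * exp (- v\<^sup>2)) \<in> borel_measurable lborel" by measurable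
  show "AE v in lborel. norm (psi a (t + c * v) * exp (- v\<^sup>2)) \<le> norm (exp (- v\<^sup>2))"
    using psi_nn psi_le1 by (intro AE_I2) (simp add: mult_left_le_one_le)
qed

lemma I_bounds: "0 \<le> (LBINT v. psi a (t + c * v) * exp (- v\<^sup>2))" "(LBINT v. psi a (t + c * v) * exp (- v\<^sup>2)) \<le> sqrt pi"
proof -
  show "0 \<le> (LBINT v. psi a (t + c * v) * exp (- v\<^sup>2))"
    using psi_nn by (intro integral_nonneg_AE AE_I2) simp
  have "(LBINT v. psi a (t + c * v) * exp (- v\<^sup>2)) \<le> (LBINT v. exp (- v\<^sup>2))"
    using psi_nn psi_le1 by (intro Bochner_Integration.integral_mono Iint gauss1(1)) (simp add: mult_left_le_one_le)
  then show "(LBINT v. psi a (t + c * v) * exp (- v\<^sup>2)) \<le> sqrt pi" by (simp add: gauss1(2))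
qed

lemma inner_lim:
  fixes h :: "nat \<Rightarrow> real"
  assumes t: "0 < t" and h: "h \<longlonglongrightarrow> 0"
  shows "(\<lambda>n. LBINT v. psi a (t + h n * v) * exp (- v\<^sup>2)) \<longlonglongrightarrow> psi a t * sqrt pi"
proof -
  have "(\<lambda>n. LBINT v. psi a (t + h n * v) * exp (- v\<^sup>2)) \<longlonglongrightarrow> (LBINT v. psi a t * exp (- v\<^sup>2))"
  proof (rule integral_dominated_convergence[where w="\<lambda>v. exp (- v\<^sup>2)"])
    show "(\<lambda>v. psi a t * exp (- v\<^sup>2)) \<in> borel_measurable lborel" by measurable
    show "(\<lambda>v. psi a (t + h n * v) * exp (- v\<^sup>2)) \<in> borel_measurable lborel" for n by measurable
    show "integrable lborel (\<lambda>v::real. exp (- v\<^sup>2))" by (rule gauss1(1))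
    show "AE v in lborel. norm (psi a (t + h n * v) * exp (- v\<^sup>2)) \<le> exp (- v\<^sup>2)" for n
      using psi_nn psi_le1 by (intro AE_I2) (simp add: mult_left_le_one_le)
    show "AE v in lborel. (\<lambda>n. psi a (t + h n * v) * exp (- v\<^sup>2)) \<longlonglongrightarrow> psi a t * exp (- v\<^sup>2)"
    proof (intro AE_I2 tendsto_mult tendsto_const)
      fix v :: real
      have conv: "(\<lambda>n. t + h n * v) \<longlonglongrightarrow> t"
        using tendsto_add[OF tendsto_const[of t] tendsto_mult[OF h tendsto_const[of v]]] by simp
      have ev: "eventually (\<lambda>n. 0 < t + h n * v) sequentially"
        using order_tendstoD(1)[OF conv t] .
      have "(\<lambda>n. exp (- (t + h n * v - a)\<^sup>2)) \<longlonglongrightarrow> exp (- (t - a)\<^sup>2)"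
        by (intro tendsto_intros conv)
      moreover have "eventually (\<lambda>n. exp (- (t + h n * v - a)\<^sup>2) = psi a (t + h n * v)) sequentially"
        using ev by eventually_elim (simp add: psi_def)
      ultimately have "(\<lambda>n. psi a (t + h n * v)) \<longlonglongrightarrow> exp (- (t - a)\<^sup>2)"
        by (rule Lim_transform_eventually)
      then show "(\<lambda>n. psi a (t + h n * v)) \<longlonglongrightarrow> psi a t"
        using t by (simp add: psi_def)
    qed
  qed
  also have "(LBINT v. psi a t * exp (- v\<^sup>2)) = psi a t * sqrt pi"
    by (simp add: gauss1(2))
  finally show ?thesis .
qed

definition en :: "nat \<Rightarrow> real" where "en n = 1 / (real (Suc n))\<^sup>2"

lemma en_pos: "0 < en n" by (simp add: en_def)

lemma sqrt_en_lim: "(\<lambda>n. sqrt (en n)) \<longlonglongrightarrow> 0"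
proof -
  have "sqrt (en n) = 1 / real (Suc n)" for n by (simp add: en_def real_sqrt_divide)
  then show ?thesis using LIMSEQ_inverse_real_of_nat by (simp add: inverse_eq_divide)
qed

lemma psi2_int: "integrable lborel (\<lambda>t. pi * psi a t)"
  by (intro integrable_mult_right psi_int)

lemma R_lim:
  "(\<lambda>n. LBINT t. psi a t * (LBINT r. psi a r * (sqrt (pi / en n) * exp (- (t - r)\<^sup>2 / en n))))
     \<longlonglongrightarrow> (LBINT t. pi * (psi a t)\<^sup>2)"
proof -
  define I where "I n t = (LBINT v. psi a (t + sqrt (en n) * v) * exp (- v\<^sup>2))" for n t
  have eq: "(LBINT t. psi a t * (LBINT r. psi a r * (sqrt (pi / en n) * exp (- (t - r)\<^sup>2 / en n))))
      = (LBINT t. psi a t * (sqrt pi * I n t))" for n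
    unfolding I_def by (simp only: inner_subst[OF en_pos])
  have "(\<lambda>n. LBINT t. psi a t * (sqrt pi * I n t)) \<longlonglongrightarrow> (LBINT t. pi * (psi a t)\<^sup>2)"
  proof (rule integral_dominated_convergence[where w="\<lambda>t. pi * psi a t"])
    show "(\<lambda>t. pi * (psi a t)\<^sup>2) \<in> borel_measurable lborel" by measurable
    show "(\<lambda>t. psi a t * (sqrt pi * I n t)) \<in> borel_measurable lborel" for n
      unfolding I_def by measurable
    show "integrable lborel (\<lambda>t. pi * psi a t)" by (rule psi2_int)
    show "AE t in lborel. norm (psi a t * (sqrt pi * I n t)) \<le> pi * psi a t" for n
    proof (intro AE_I2)
      fix t
      have "0 \<le> I n t" "I n t \<le> sqrt pi" unfolding I_def by (rule I_bounds)+
      then have "sqrt pi * I n t \<le> sqrt pi * sqrt pi" "0 \<le> sqrt pi * I n t"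
        using mult_left_mono[of "I n t" "sqrt pi" "sqrt pi"] by auto
      then have "psi a t * (sqrt pi * I n t) \<le> psi a t * pi" "0 \<le> psi a t * (sqrt pi * I n t)"
        using psi_nn[of a t] by (auto intro: mult_left_mono)
      then show "norm (psi a t * (sqrt pi * I n t)) \<le> pi * psi a t" by (simp add: mult.commute)
    qed
    show "AE t in lborel. (\<lambda>n. psi a t * (sqrt pi * I n t)) \<longlonglongrightarrow> pi * (psi a t)\<^sup>2"
    proof (intro AE_I2)
      fix t :: real
      show "(\<lambda>n. psi a t * (sqrt pi * I n t)) \<longlonglongrightarrow> pi * (psi a t)\<^sup>2"
      proof (cases "0 < t")
        case True
        have "(\<lambda>n. psi a t * (sqrt pi * I n t)) \<longlonglongrightarrow> psi a t * (sqrt pi * (psi a t * sqrt pi))"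
          unfolding I_def by (intro tendsto_mult tendsto_const inner_lim[OF True sqrt_en_lim])
        moreover have "psi a t * (sqrt pi * (psi a t * sqrt pi)) = pi * (psi a t)\<^sup>2"
        proof -
          have "psi a t * (sqrt pi * (psi a t * sqrt pi)) = (sqrt pi * sqrt pi) * (psi a t * psi a t)"
            by (simp only: mult_ac)
          then show ?thesis by (simp add: power2_eq_square)
        qed
        ultimately show ?thesis by simp
      next
        case False
        then have "psi a t = 0" by (simp add: psi_def)
        then show ?thesis by simp
      qed
    qed
  qed
  then show ?thesis by (simp only: eq)
qed

lemma en_dec: "en (Suc n) \<le> en n"
  unfolding en_def by (intro divide_left_mono power_mono) auto

lemma en_lim: "en \<longlonglongrightarrow> 0"
proof -
  have "(\<lambda>n. (sqrt (en n))\<^sup>2) \<longlonglongrightarrow> 0\<^sup>2" by (intro tendsto_power sqrt_en_lim)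
  moreover have "(sqrt (en n))\<^sup>2 = en n" for n using en_pos[of n] by simp
  ultimately show ?thesis by simp
qed

lemma plancherel:
  shows "integrable lborel (\<lambda>b. (cmod (Gf a b))\<^sup>2)"
    and "(LBINT b. (cmod (Gf a b))\<^sup>2) = pi * (LBINT t. (psi a t)\<^sup>2)"
proof -
  define f where "f n b = exp (- en n * b\<^sup>2) * (cmod (Gf a b))\<^sup>2" for n b
  have fnn: "0 \<le> f n b" for n b by (simp add: f_def)
  have inc: "incseq (\<lambda>n b. ennreal (f n b))"
  proof (rule incseq_SucI, rule le_funI)
    fix n b
    have "- en n * b\<^sup>2 \<le> - en (Suc n) * b\<^sup>2"
      using en_dec[of n] by (intro mult_right_mono) auto
    then have "exp (- en n * b\<^sup>2) \<le> exp (- en (Suc n) * b\<^sup>2)" by simp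
    then show "ennreal (f n b) \<le> ennreal (f (Suc n) b)"
      unfolding f_def by (intro ennreal_leI mult_right_mono) auto
  qed
  have limr: "(\<lambda>n. f n b) \<longlonglongrightarrow> (cmod (Gf a b))\<^sup>2" for b
  proof -
    have "(\<lambda>n. exp (- en n * b\<^sup>2) * (cmod (Gf a b))\<^sup>2) \<longlonglongrightarrow> exp (- 0 * b\<^sup>2) * (cmod (Gf a b))\<^sup>2"
      by (intro tendsto_intros en_lim)
    then show ?thesis unfolding f_def by simp
  qed
  have lim: "(\<lambda>n. ennreal (f n b)) \<longlonglongrightarrow> ennreal ((cmod (Gf a b))\<^sup>2)" for b
    by (intro tendsto_ennrealI limr)
  have "(\<lambda>n. \<integral>\<^sup>+ b. ennreal (f n b) \<partial>lborel) \<longlonglongrightarrow> (\<integral>\<^sup>+ b. ennreal ((cmod (Gf a b))\<^sup>2) \<partial>lborel)"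
    by (rule nn_integral_LIMSEQ[OF inc]) (use lim in \<open>auto simp: f_def\<close>)
  moreover have "(\<integral>\<^sup>+ b. ennreal (f n b) \<partial>lborel) = ennreal (LBINT t. psi a t * (LBINT r. psi a r * (sqrt (pi / en n) * exp (- (t - r)\<^sup>2 / en n))))" for n
  proof -
    have "(\<integral>\<^sup>+ b. ennreal (f n b) \<partial>lborel) = ennreal (LBINT b. f n b)"
      unfolding f_def using fnn by (intro nn_integral_eq_integral plancherel_eps(1)[OF en_pos]) (auto simp: f_def)
    also have "(LBINT b. f n b) = (LBINT t. psi a t * (LBINT r. psi a r * (sqrt (pi / en n) * exp (- (t - r)\<^sup>2 / en n))))"
      unfolding f_def by (rule plancherel_eps(2)[OF en_pos])
    finally show ?thesis .
  qed
  ultimately have l1: "(\<lambda>n. ennreal (LBINT t. psi a t * (LBINT r. psi a r * (sqrt (pi / en n) * exp (- (t - r)\<^sup>2 / en n)))))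
       \<longlonglongrightarrow> (\<integral>\<^sup>+ b. ennreal ((cmod (Gf a b))\<^sup>2) \<partial>lborel)"
    by simp
  have l2: "(\<lambda>n. ennreal (LBINT t. psi a t * (LBINT r. psi a r * (sqrt (pi / en n) * exp (- (t - r)\<^sup>2 / en n)))))
       \<longlonglongrightarrow> ennreal (LBINT t. pi * (psi a t)\<^sup>2)"
    by (intro tendsto_ennrealI R_lim)
  have nn: "(\<integral>\<^sup>+ b. ennreal ((cmod (Gf a b))\<^sup>2) \<partial>lborel) = ennreal (pi * (LBINT t. (psi a t)\<^sup>2))"
    using LIMSEQ_unique[OF l1 l2] by simp
  have "integrable lborel (\<lambda>b. (cmod (Gf a b))\<^sup>2) \<and> (LBINT b. (cmod (Gf a b))\<^sup>2) = pi * (LBINT t. (psi a t)\<^sup>2)"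
    by (rule nn_integral_eq_integrable[THEN iffD1, OF _ _ _ nn]) auto
  then show "integrable lborel (\<lambda>b. (cmod (Gf a b))\<^sup>2)" "(LBINT b. (cmod (Gf a b))\<^sup>2) = pi * (LBINT t. (psi a t)\<^sup>2)"
    by auto
qed

lemma rep_G:
  fixes a b :: real
  shows "(CLBINT t. indicator {0<..} t *\<^sub>R exp (- (complex_of_real t - (complex_of_real a + \<i> * complex_of_real b))\<^sup>2))
       = complex_of_real (exp (b\<^sup>2)) * cis (- (2 * a * b)) * Gf a b"
proof -
  have pw: "indicator {0<..} t *\<^sub>R exp (- (complex_of_real t - (complex_of_real a + \<i> * complex_of_real b))\<^sup>2)
      = complex_of_real (exp (b\<^sup>2)) * cis (- (2 * a * b)) * (complex_of_real (psi a t) * cis (2 * b * t))" for t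
  proof -
    define z where "z = - (complex_of_real t - (complex_of_real a + \<i> * complex_of_real b))\<^sup>2"
    have re: "Re z = - (t - a)\<^sup>2 + b\<^sup>2" and im: "Im z = 2 * b * (t - a)"
      unfolding z_def by (simp_all add: power2_eq_square algebra_simps)
    have "exp z = complex_of_real (exp (- (t - a)\<^sup>2 + b\<^sup>2)) * cis (2 * b * (t - a))"
      using exp_eq_polar[of z] unfolding re im .
    also have "\<dots> = complex_of_real (exp (b\<^sup>2)) * cis (- (2 * a * b)) * (complex_of_real (exp (- (t - a)\<^sup>2)) * cis (2 * b * t))"
    proof -
      have "cis (2 * b * (t - a)) = cis (- (2 * a * b)) * cis (2 * b * t)"
        by (simp add: cis_mult algebra_simps)
      moreover have "exp (- (t - a)\<^sup>2 + b\<^sup>2) = exp (b\<^sup>2) * exp (- (t - a)\<^sup>2)"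
        by (simp add: exp_add[symmetric])
      ultimately show ?thesis by (simp add: mult_ac)
    qed
    finally have ez: "exp z = complex_of_real (exp (b\<^sup>2)) * cis (- (2 * a * b)) * (complex_of_real (exp (- (t - a)\<^sup>2)) * cis (2 * b * t))" .
    show ?thesis
      unfolding z_def[symmetric] ez psi_def by (simp add: indicator_def)
  qed
  have "(CLBINT t. indicator {0<..} t *\<^sub>R exp (- (complex_of_real t - (complex_of_real a + \<i> * complex_of_real b))\<^sup>2))
      = (CLBINT t. complex_of_real (exp (b\<^sup>2)) * cis (- (2 * a * b)) * (complex_of_real (psi a t) * cis (2 * b * t)))"
    by (simp only: pw)
  also have "\<dots> = complex_of_real (exp (b\<^sup>2)) * cis (- (2 * a * b)) * Gf a b"
    unfolding Gf_def by (rule integral_mult_right_zero)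
  finally show ?thesis .
qed

lemma rho_G:
  fixes y y' x :: real
  shows "rhoT (0, y) (x, y') = - exp (- (y - y')\<^sup>2) / pi ^ 3 * (cmod (Gf ((y + y') / sqrt 2) (x / sqrt 2)))\<^sup>2"
proof -
  define a where "a = (y + y') / sqrt 2"
  define b where "b = x / sqrt 2"
  have arg: "complex_of_real (sqrt 2) * ((complex_of_real (y + y') - \<i> * complex_of_real (0 - x)) / 2)
      = complex_of_real a + \<i> * complex_of_real b"
  proof -
    have s2: "sqrt 2 / 2 = 1 / sqrt 2" by (simp add: field_simps)
    have "complex_of_real (sqrt 2) * ((complex_of_real (y + y') - \<i> * complex_of_real (0 - x)) / 2)
        = complex_of_real (sqrt 2 / 2) * (complex_of_real (y + y') + \<i> * complex_of_real x)"
      by (simp add: field_simps)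
    also have "\<dots> = complex_of_real a + \<i> * complex_of_real b"
      unfolding s2 a_def b_def by (simp add: field_simps)
    finally show ?thesis .
  qed
  have h: "ginibre_h ((complex_of_real (y + y') - \<i> * complex_of_real (0 - x)) / 2)
      = (2 / complex_of_real (sqrt pi)) * (complex_of_real (exp (b\<^sup>2)) * cis (- (2 * a * b)) * Gf a b) / complex_of_real (2 * pi)"
    unfolding ginibre_h_def arg cerf_rep rep_G ..
  have nh: "(cmod (ginibre_h ((complex_of_real (y + y') - \<i> * complex_of_real (0 - x)) / 2)))\<^sup>2
      = (exp (b\<^sup>2))\<^sup>2 * (cmod (Gf a b))\<^sup>2 / pi ^ 3"
  proof -
    have "cmod (ginibre_h ((complex_of_real (y + y') - \<i> * complex_of_real (0 - x)) / 2))
        = (2 / sqrt pi) * (exp (b\<^sup>2) * cmod (Gf a b)) / (2 * pi)"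
      unfolding h by (simp add: norm_mult norm_divide)
    then have "(cmod (ginibre_h ((complex_of_real (y + y') - \<i> * complex_of_real (0 - x)) / 2)))\<^sup>2
        = (4 / (sqrt pi)\<^sup>2) * ((exp (b\<^sup>2))\<^sup>2 * (cmod (Gf a b))\<^sup>2) / (4 * pi\<^sup>2)"
      by (simp add: power_mult_distrib power_divide)
    also have "\<dots> = (exp (b\<^sup>2))\<^sup>2 * (cmod (Gf a b))\<^sup>2 / pi ^ 3"
      by (simp add: field_simps power2_eq_square power3_eq_cube)
    finally show ?thesis .
  qed
  have eb: "(exp (b\<^sup>2))\<^sup>2 = exp (x\<^sup>2)"
  proof -
    have "(exp (b\<^sup>2))\<^sup>2 = exp (2 * b\<^sup>2)" by (simp add: power2_eq_square exp_add[symmetric])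
    also have "2 * b\<^sup>2 = x\<^sup>2" unfolding b_def by (simp add: power_divide)
    finally show ?thesis .
  qed
  have "rhoT (0, y) (x, y') = - exp (- (0 - x)\<^sup>2 - (y - y')\<^sup>2) * (exp (x\<^sup>2) * (cmod (Gf a b))\<^sup>2 / pi ^ 3)"
    unfolding rhoT_def using nh eb by simp
  also have "exp (- (0 - x)\<^sup>2 - (y - y')\<^sup>2) = exp (- (y - y')\<^sup>2) * exp (- x\<^sup>2)"
    by (simp add: exp_add[symmetric] exp_diff[symmetric])
  also have "- (exp (- (y - y')\<^sup>2) * exp (- x\<^sup>2)) * (exp (x\<^sup>2) * (cmod (Gf a b))\<^sup>2 / pi ^ 3)
      = - exp (- (y - y')\<^sup>2) / pi ^ 3 * (cmod (Gf a b))\<^sup>2 * (exp (- x\<^sup>2) * exp (x\<^sup>2))"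
    by (simp add: field_simps)
  also have "exp (- x\<^sup>2) * exp (x\<^sup>2) = 1" by (simp add: exp_add[symmetric])
  finally show ?thesis unfolding a_def b_def by simp
qed

definition P :: "real \<Rightarrow> real" where "P s = (LBINT t. (psi (s / sqrt 2) t)\<^sup>2)"

lemma psi2_le: "(psi a t)\<^sup>2 \<le> exp (- 2 * (t - a)\<^sup>2)"
proof -
  have "(psi a t)\<^sup>2 \<le> (exp (- (t - a)\<^sup>2))\<^sup>2"
    using psi_nn psi_le by (intro power_mono) auto
  also have "\<dots> = exp (- 2 * (t - a)\<^sup>2)" by (simp add: power2_eq_square exp_add[symmetric])
  finally show ?thesis .
qed

lemma psi2_integrable: "integrable lborel (\<lambda>t. (psi a t)\<^sup>2)"
proof (rule Bochner_Integration.integrable_bound)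
  show "integrable lborel (\<lambda>t. exp (- 2 * (t - a)\<^sup>2))" by (rule gauss_int) simp
  show "(\<lambda>t. (psi a t)\<^sup>2) \<in> borel_measurable lborel" by measurable
  show "AE t in lborel. norm ((psi a t)\<^sup>2) \<le> norm (exp (- 2 * (t - a)\<^sup>2))"
    using psi2_le by (intro AE_I2) simp
qed

lemma P_nn: "0 \<le> P s"
  unfolding P_def by (intro integral_nonneg_AE AE_I2) simp

lemma P_le: "P s \<le> sqrt (pi / 2)"
proof -
  have "P s \<le> (LBINT t. exp (- 2 * (t - s / sqrt 2)\<^sup>2))"
    unfolding P_def by (intro Bochner_Integration.integral_mono psi2_integrable psi2_le gauss_int(1)) simp
  also have "\<dots> = sqrt (pi / 2)" by (rule gauss_int(2)) simp
  finally show ?thesis .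
qed

lemma P_meas[measurable]: "P \<in> borel_measurable borel"
  unfolding P_def psi_def by measurable

lemma xint:
  fixes y y' :: real
  shows "integrable lborel (\<lambda>x. rhoT (0, y) (x, y'))"
    and "(LBINT x. rhoT (0, y) (x, y')) = - (sqrt 2 / pi\<^sup>2) * exp (- (y - y')\<^sup>2) * P (y + y')"
proof -
  define a where "a = (y + y') / sqrt 2"
  define q where "q b = (cmod (Gf a b))\<^sup>2" for b
  have qi: "integrable lborel q" unfolding q_def by (rule plancherel(1))
  have qv: "(LBINT b. q b) = pi * P (y + y')" unfolding q_def P_def a_def by (rule plancherel(2))
  have rq: "rhoT (0, y) (x, y') = (- exp (- (y - y')\<^sup>2) / pi ^ 3) * q (0 + (1 / sqrt 2) * x)" for x
    unfolding rho_G q_def a_def by simp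
  have qi2: "integrable lborel (\<lambda>x. q (0 + (1 / sqrt 2) * x))"
    by (rule lborel_integrable_real_affine[OF qi]) simp
  then show "integrable lborel (\<lambda>x. rhoT (0, y) (x, y'))"
    unfolding rq by (rule integrable_mult_right)
  have "(LBINT b. q b) = \<bar>1 / sqrt 2\<bar> *\<^sub>R (LBINT x. q (0 + (1 / sqrt 2) * x))"
    by (rule lborel_integral_real_affine) simp
  then have qx: "(LBINT x. q (0 + (1 / sqrt 2) * x)) = sqrt 2 * (pi * P (y + y'))"
    unfolding qv by (simp add: field_simps)
  have "(LBINT x. rhoT (0, y) (x, y')) = (- exp (- (y - y')\<^sup>2) / pi ^ 3) * (LBINT x. q (0 + (1 / sqrt 2) * x))"
    unfolding rq by (rule integral_mult_right_zero)
  also have "\<dots> = - (sqrt 2 / pi\<^sup>2) * exp (- (y - y')\<^sup>2) * P (y + y')"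
    unfolding qx by (simp add: field_simps power2_eq_square power3_eq_cube)
  finally show "(LBINT x. rhoT (0, y) (x, y')) = - (sqrt 2 / pi\<^sup>2) * exp (- (y - y')\<^sup>2) * P (y + y')" .
qed

lemma abs_gauss:
  fixes m :: real
  shows "integrable lborel (\<lambda>x. \<bar>x - m\<bar> * exp (- (x - m)\<^sup>2))"
proof -
  have nd: "normal_density m (1 / sqrt 2) x = (1 / sqrt pi) * exp (- (x - m)\<^sup>2)" for x
    by (simp add: normal_density_def power_divide real_sqrt_divide)
  have "integrable lborel (\<lambda>x. sqrt pi * (normal_density m (1 / sqrt 2) x * \<bar>x - m\<bar> ^ 1))"
    by (intro integrable_mult_right integrable_normal_moment_abs) simp
  then show ?thesis unfolding nd by (simp add: mult_ac)
qed

lemma fubini_gen: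
  fixes f :: "real \<Rightarrow> real \<Rightarrow> real"
  assumes fm[measurable]: "(\<lambda>(x, y). f x y) \<in> borel_measurable (lborel \<Otimes>\<^sub>M lborel)"
    and iy: "\<And>x. integrable lborel (f x)"
    and ix: "integrable lborel (\<lambda>x. \<integral>y. norm (f x y) \<partial>lborel)"
  shows "(\<integral>x. (\<integral>y. f x y \<partial>lborel) \<partial>lborel) = (\<integral>y. (\<integral>x. f x y \<partial>lborel) \<partial>lborel)"
proof -
  have prod: "integrable (lborel \<Otimes>\<^sub>M lborel) (\<lambda>(x, y). f x y)"
    by (rule pair_sigma_finite.Fubini_integrable[OF pf_lborel fm]) (use ix iy in auto)
  show ?thesis
    using pair_sigma_finite.Fubini_integral[OF pf_lborel prod] by simp
qed

lemma half_deriv: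
  "((\<lambda>t. - (1/2) * exp (- (t - m)\<^sup>2)) has_real_derivative ((x - m) * exp (- (x - m)\<^sup>2))) (at (x::real))"
proof -
  define E where "E = exp (- (x - m)\<^sup>2)"
  have "((\<lambda>t. - (1/2) * exp (- (t - m)\<^sup>2)) has_real_derivative (- (1/2) * (E * (- (2 * (x - m)))))) (at x)"
    unfolding E_def by (rule derivative_eq_intros refl | simp)+
  moreover have "- (1/2) * (E * (- (2 * (x - m)))) = (x - m) * E" by (simp add: algebra_simps)
  ultimately show ?thesis by (simp add: E_def)
qed

lemma half_moment:
  fixes m :: real
  shows "(LBINT t. indicator {0<..} t * ((t - m) * exp (- (t - m)\<^sup>2))) = exp (- m\<^sup>2) / 2"
proof -
  define f where "f t = (t - m) * exp (- (t - m)\<^sup>2)" for t :: real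
  define F where "F t = - (1/2) * exp (- (t - m)\<^sup>2)" for t :: real
  have fi: "integrable lborel f"
  proof (rule Bochner_Integration.integrable_bound[OF abs_gauss[of m]])
    show "f \<in> borel_measurable lborel" unfolding f_def by measurable
    show "AE x in lborel. norm (f x) \<le> norm (\<bar>x - m\<bar> * exp (- (x - m)\<^sup>2))"
      by (intro AE_I2) (simp add: f_def abs_mult)
  qed
  have si: "set_integrable lborel {0<..} f"
    unfolding set_integrable_def using fi by (intro integrable_mult_indicator) auto
  have "(LBINT t=0..\<infinity>. f t) = 0 - F 0"
  proof (rule interval_integral_FTC_integrable)
    show "(0::ereal) < \<infinity>" by simp
    show "(F has_vector_derivative f x) (at x)" for x
      unfolding F_def f_def has_real_derivative_iff_has_vector_derivative[symmetric]
      by (rule half_deriv)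
    show "isCont f x" for x unfolding f_def by (intro continuous_intros)
    have "einterval 0 \<infinity> = {0::real<..}" by (auto simp: einterval_def zero_ereal_def)
    then show "set_integrable lborel (einterval 0 \<infinity>) f" using si by simp
    show "((F \<circ> real_of_ereal) \<longlongrightarrow> F 0) (at_right 0)"
      unfolding zero_ereal_def ereal_tendsto_simps F_def by (intro tendsto_eq_intros) auto
    show "((F \<circ> real_of_ereal) \<longlongrightarrow> 0) (at_left \<infinity>)"
      unfolding ereal_tendsto_simps F_def by real_asymp
  qed
  then show ?thesis
    by (simp add: interval_lebesgue_integral_0_infty set_lebesgue_integral_def F_def f_def)
qed

lemma gauss_first_moment:
  fixes mu y :: real
  shows "(LBINT x. (x - y) * exp (- 2 * (x - mu)\<^sup>2)) = sqrt (pi / 2) * (mu - y)"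
    and "integrable lborel (\<lambda>x. (x - y) * exp (- 2 * (x - mu)\<^sup>2))"
proof -
  have nd: "exp (- 2 * (x - mu)\<^sup>2) = sqrt (pi / 2) * normal_density mu (1 / 2) x" for x
  proof -
    have "normal_density mu (1 / 2) x = sqrt (2 / pi) * exp (- 2 * (x - mu)\<^sup>2)"
      by (simp add: normal_density_def power_divide real_sqrt_divide field_simps)
    then show ?thesis by (simp add: real_sqrt_divide field_simps)
  qed
  have i1: "integrable lborel (\<lambda>x. normal_density mu (1 / 2) x * x)" by (rule integrable_normal_moment_nz_1) simp
  have i0: "integrable lborel (\<lambda>x. normal_density mu (1 / 2) x)" by simp
  have eq: "(x - y) * exp (- 2 * (x - mu)\<^sup>2) = sqrt (pi / 2) * (normal_density mu (1 / 2) x * x - y * normal_density mu (1 / 2) x)" for x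
    unfolding nd by (simp add: algebra_simps)
  show "integrable lborel (\<lambda>x. (x - y) * exp (- 2 * (x - mu)\<^sup>2))"
    unfolding eq by (intro integrable_mult_right Bochner_Integration.integrable_diff i1 i0)
  show "(LBINT x. (x - y) * exp (- 2 * (x - mu)\<^sup>2)) = sqrt (pi / 2) * (mu - y)"
    unfolding eq using i0 i1 by (simp add: integral_normal_moment_nz_1)
qed

lemma exponent_id:
  fixes y y' t :: real
  shows "- (y - y')\<^sup>2 - 2 * (t - (y + y') / sqrt 2)\<^sup>2 = - (t - sqrt 2 * y)\<^sup>2 - 2 * (y' - t / sqrt 2)\<^sup>2"
proof -
  define r where "r = sqrt 2"
  have r2: "r * r = 2" unfolding r_def by simp
  have rn: "r \<noteq> 0" unfolding r_def by simp
  have r2': "r * (r * z) = 2 * z" for z by (simp add: mult.assoc[symmetric] r2)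
  have a: "(y + y') / r = r * (y + y') / 2" and b: "t / r = r * t / 2"
    using rn by (simp_all add: field_simps r2')
  have "- (y - y')\<^sup>2 - 2 * (t - r * (y + y') / 2)\<^sup>2 = - (t - r * y)\<^sup>2 - 2 * (y' - r * t / 2)\<^sup>2"
  proof -
    have e1: "2 * (t - r * (y + y') / 2)\<^sup>2 = 2 * t\<^sup>2 - 2 * (r * t) * (y + y') + (r * r) * (y + y')\<^sup>2 / 2"
      by (simp add: power2_eq_square field_simps)
    have e2: "2 * (y' - r * t / 2)\<^sup>2 = 2 * y'\<^sup>2 - 2 * (r * t) * y' + (r * r) * t\<^sup>2 / 2"
      by (simp add: power2_eq_square field_simps)
    have e3: "(t - r * y)\<^sup>2 = t\<^sup>2 - 2 * (r * t) * y + (r * r) * y\<^sup>2"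
      by (simp add: power2_eq_square field_simps)
    show ?thesis unfolding e1 e2 e3 r2 by (simp add: power2_eq_square field_simps)
  qed
  then show ?thesis unfolding r_def[symmetric] a b .
qed


lemma psi2_pos: "0 < t \<Longrightarrow> (psi a t)\<^sup>2 = exp (- 2 * (t - a)\<^sup>2)"
  by (simp add: psi_def power2_eq_square exp_add[symmetric])

lemma psi2_npos: "\<not> 0 < t \<Longrightarrow> psi a t = 0"
  by (simp add: psi_def)

lemma g_int:
  fixes y :: real
  shows "integrable lborel (\<lambda>y'. (y' - y) * exp (- (y - y')\<^sup>2) * P (y + y'))"
proof (rule Bochner_Integration.integrable_bound)
  show "integrable lborel (\<lambda>y'. sqrt (pi / 2) * (\<bar>y' - y\<bar> * exp (- (y' - y)\<^sup>2)))"
    by (intro integrable_mult_right abs_gauss)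
  show "(\<lambda>y'. (y' - y) * exp (- (y - y')\<^sup>2) * P (y + y')) \<in> borel_measurable lborel" by measurable
  show "AE y' in lborel. norm ((y' - y) * exp (- (y - y')\<^sup>2) * P (y + y')) \<le> norm (sqrt (pi / 2) * (\<bar>y' - y\<bar> * exp (- (y' - y)\<^sup>2)))"
  proof (intro AE_I2)
    fix y' :: real
    have sq: "(y - y')\<^sup>2 = (y' - y)\<^sup>2" by (simp add: power2_commute)
    have "norm ((y' - y) * exp (- (y - y')\<^sup>2) * P (y + y')) = (\<bar>y' - y\<bar> * exp (- (y' - y)\<^sup>2)) * P (y + y')"
      using P_nn by (simp add: abs_mult sq)
    also have "\<dots> \<le> (\<bar>y' - y\<bar> * exp (- (y' - y)\<^sup>2)) * sqrt (pi / 2)"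
      by (intro mult_left_mono P_le) simp
    finally show "norm ((y' - y) * exp (- (y - y')\<^sup>2) * P (y + y')) \<le> norm (sqrt (pi / 2) * (\<bar>y' - y\<bar> * exp (- (y' - y)\<^sup>2)))"
      by (simp add: mult.commute abs_mult)
  qed
qed

lemma g_val:
  fixes y :: real
  shows "(LBINT y'. (y' - y) * exp (- (y - y')\<^sup>2) * P (y + y')) = sqrt pi / 4 * exp (- 2 * y\<^sup>2)"
proof -
  define F where "F y' t = (y' - y) * exp (- (y - y')\<^sup>2) * (psi ((y + y') / sqrt 2) t)\<^sup>2" for y' t :: real
  have Fm[measurable]: "(\<lambda>(y', t). F y' t) \<in> borel_measurable (lborel \<Otimes>\<^sub>M lborel)"
    unfolding F_def psi_def by measurable
  have gF: "(y' - y) * exp (- (y - y')\<^sup>2) * P (y + y') = (LBINT t. F y' t)" for y'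
    unfolding F_def P_def by (rule integral_mult_right_zero[symmetric])
  have iy: "integrable lborel (F y')" for y'
    unfolding F_def by (intro integrable_mult_right psi2_integrable)
  have ix: "integrable lborel (\<lambda>y'. LBINT t. norm (F y' t))"
  proof -
    have "(LBINT t. norm (F y' t)) = norm ((y' - y) * exp (- (y - y')\<^sup>2) * P (y + y'))" for y'
    proof -
      have "(LBINT t. norm (F y' t)) = (LBINT t. \<bar>(y' - y) * exp (- (y - y')\<^sup>2)\<bar> * (psi ((y + y') / sqrt 2) t)\<^sup>2)"
        unfolding F_def by (simp add: abs_mult)
      also have "\<dots> = \<bar>(y' - y) * exp (- (y - y')\<^sup>2)\<bar> * P (y + y')"
        unfolding P_def by (rule integral_mult_right_zero)
      also have "\<dots> = norm ((y' - y) * exp (- (y - y')\<^sup>2) * P (y + y'))"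
        using P_nn by (simp add: abs_mult)
      finally show ?thesis .
    qed
    then show ?thesis using integrable_norm[OF g_int[of y]] by simp
  qed
  have inner: "(LBINT y'. F y' t) = indicator {0<..} t * (sqrt pi / 2 * ((t - sqrt 2 * y) * exp (- (t - sqrt 2 * y)\<^sup>2)))" for t
  proof (cases "0 < t")
    case False
    then show ?thesis by (simp add: F_def psi2_npos)
  next
    case True
    have pw: "F y' t = exp (- (t - sqrt 2 * y)\<^sup>2) * ((y' - y) * exp (- 2 * (y' - t / sqrt 2)\<^sup>2))" for y'
    proof -
      have "exp (- (y - y')\<^sup>2) * exp (- 2 * (t - (y + y') / sqrt 2)\<^sup>2) = exp (- (t - sqrt 2 * y)\<^sup>2) * exp (- 2 * (y' - t / sqrt 2)\<^sup>2)"
        unfolding exp_add[symmetric] using exponent_id[of y y' t] by (simp add: algebra_simps)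
      then show ?thesis unfolding F_def psi2_pos[OF True] by (simp add: mult_ac)
    qed
    have "(LBINT y'. F y' t) = exp (- (t - sqrt 2 * y)\<^sup>2) * (LBINT y'. (y' - y) * exp (- 2 * (y' - t / sqrt 2)\<^sup>2))"
      unfolding pw by (rule integral_mult_right_zero)
    also have "\<dots> = exp (- (t - sqrt 2 * y)\<^sup>2) * (sqrt (pi / 2) * (t / sqrt 2 - y))"
      by (simp only: gauss_first_moment(1))
    also have "sqrt (pi / 2) * (t / sqrt 2 - y) = sqrt pi / 2 * (t - sqrt 2 * y)"
      by (simp add: real_sqrt_divide field_simps)
    finally show ?thesis using True by (simp add: mult_ac)
  qed
  have "(LBINT y'. (y' - y) * exp (- (y - y')\<^sup>2) * P (y + y')) = (LBINT y'. LBINT t. F y' t)"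
    by (simp only: gF)
  also have "\<dots> = (LBINT t. LBINT y'. F y' t)"
    by (rule fubini_gen[OF Fm iy ix])
  also have "\<dots> = (LBINT t. sqrt pi / 2 * (indicator {0<..} t * ((t - sqrt 2 * y) * exp (- (t - sqrt 2 * y)\<^sup>2))))"
    by (simp only: inner mult.left_commute[of "indicator {0<..} _"])
  also have "\<dots> = sqrt pi / 2 * (exp (- (sqrt 2 * y)\<^sup>2) / 2)"
    by (simp only: integral_mult_right_zero half_moment)
  also have "\<dots> = sqrt pi / 4 * exp (- 2 * y\<^sup>2)"
    by (simp add: power_mult_distrib)
  finally show ?thesis .
qed

lemma yint:
  fixes y :: real
  shows "integrable lborel (\<lambda>y'. (y' - y) * (LBINT x. rhoT (0, y) (x, y')))"
    and "(LBINT y'. (y' - y) * (LBINT x. rhoT (0, y) (x, y'))) = - (sqrt 2 / pi\<^sup>2) * (sqrt pi / 4 * exp (- 2 * y\<^sup>2))"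
proof -
  have eq: "(y' - y) * (LBINT x. rhoT (0, y) (x, y')) = - (sqrt 2 / pi\<^sup>2) * ((y' - y) * exp (- (y - y')\<^sup>2) * P (y + y'))" for y'
    unfolding xint(2) by (simp add: mult_ac)
  show "integrable lborel (\<lambda>y'. (y' - y) * (LBINT x. rhoT (0, y) (x, y')))"
    unfolding eq by (intro integrable_mult_right g_int)
  show "(LBINT y'. (y' - y) * (LBINT x. rhoT (0, y) (x, y'))) = - (sqrt 2 / pi\<^sup>2) * (sqrt pi / 4 * exp (- 2 * y\<^sup>2))"
    unfolding eq integral_mult_right_zero g_val ..
qed

theorem mainTheorem3:
  fixes \<beta> :: real
  assumes "\<beta> = 2"
  shows "(\<forall>y y'. integrable lborel (\<lambda>x'. rhoT (0, y) (x', y'))) \<and>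
         (\<forall>y. integrable lborel
                 (\<lambda>y'. (y' - y) * (LINT x'|lborel. rhoT (0, y) (x', y')))) \<and>
         integrable lborel
           (\<lambda>y. LINT y'|lborel. (y' - y) * (LINT x'|lborel. rhoT (0, y) (x', y'))) \<and>
         - 2 * pi * \<beta> *
           (LINT y|lborel. LINT y'|lborel. (y' - y) * (LINT x'|lborel. rhoT (0, y) (x', y'))) = 1"
proof (intro conjI allI)
  show "integrable lborel (\<lambda>x'. rhoT (0, y) (x', y'))" for y y' by (rule xint(1))
  show "integrable lborel (\<lambda>y'. (y' - y) * (LINT x'|lborel. rhoT (0, y) (x', y')))" for y by (rule yint(1))
  have ig: "integrable lborel (\<lambda>y::real. exp (- 2 * y\<^sup>2))"
    using gauss_int(1)[of 2 0] by simp
  have vg: "(LBINT y::real. exp (- 2 * y\<^sup>2)) = sqrt (pi / 2)"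
    using gauss_int(2)[of 2 0] by simp
  show "integrable lborel (\<lambda>y. LINT y'|lborel. (y' - y) * (LINT x'|lborel. rhoT (0, y) (x', y')))"
    unfolding yint(2) by (intro integrable_mult_right ig)
  have "(LINT y|lborel. LINT y'|lborel. (y' - y) * (LINT x'|lborel. rhoT (0, y) (x', y')))
      = - (sqrt 2 / pi\<^sup>2) * (sqrt pi / 4 * sqrt (pi / 2))"
    unfolding yint(2) integral_mult_right_zero vg ..
  also have "- (sqrt 2 / pi\<^sup>2) * (sqrt pi / 4 * sqrt (pi / 2)) = - (sqrt 2 * (sqrt pi * sqrt (pi / 2))) / (4 * pi\<^sup>2)"
    by (simp add: field_simps)
  also have "sqrt 2 * (sqrt pi * sqrt (pi / 2)) = pi"
    by (simp add: real_sqrt_divide)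
  also have "- pi / (4 * pi\<^sup>2) = - 1 / (4 * pi)"
    by (simp add: power2_eq_square)
  finally have V: "(LINT y|lborel. LINT y'|lborel. (y' - y) * (LINT x'|lborel. rhoT (0, y) (x', y'))) = - 1 / (4 * pi)" .
  show "- 2 * pi * \<beta> *
           (LINT y|lborel. LINT y'|lborel. (y' - y) * (LINT x'|lborel. rhoT (0, y) (x', y'))) = 1"
    unfolding V assms by simp
qed

end
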